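(* In the setting below, with all parameters other than $S$ fixed, $$\lim_{S\to\infty}\bar P_{\mathrm{out}}=K\sum_{n=0}^\infty\frac{(m)_n\delta^n(2b)^{1+n}}{(n!)^2}\gamma\!\left(1+n,\frac{w_1a^\alpha}{2b}\right).$$ Setting: $r_{\mathrm{e}},a>0$; for $S>0$ the satellite positions form a homogeneous Poisson point process on the sphere of radius $r_{\mathrm{e}}+a$ centered at $O$ with intensity $S/(4\pi(r_{\mathrm{e}}+a)^2)$; a terminal sits at a fixed point $u$ with $|u|=r_{\mathrm{e}}$. With $\theta_{\mathrm{min}}$, $\omega_{\mathrm{th}}>0$ let $d_{\mathrm{max}}=\sqrt{r_{\mathrm{e}}^2\sin^2\theta_{\mathrm{min}}+a^2+2r_{\mathrm{e}}a}-r_{\mathrm{e}}\sin\theta_{\mathrm{min}}$, $\psi_{\mathrm{th}}=\sin^{-1}\!\left(\frac{r_{\mathrm{e}}+a}{r_{\mathrm{e}}}\sin\omega_{\mathrm{th}}\right)-\omega_{\mathrm{th}}$, $d_{\mathrm{th}}=\sqrt{r_{\mathrm{e}}^2+(r_{\mathrm{e}}+a)^2-2r_{\mathrm{e}}(r_{\mathrm{e}}+a)\cos\psi_{\mathrm{th}}}$, with $a<d_{\mathrm{th}}\le d_{\mathrm{max}}$. Let $s_0$ be the nearest satellite, at distance $d_{s_0}$. Let $h$ be independent of the satellite positions with CDF $F_h(x)=K\sum_{n\ge0}\frac{(m)_n\delta^n(2b)^{1+n}}{(n!)^2}\gamma(1+n,\frac{x}{2b})$, where $b,m,\Omega>0$,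 $K=\left(\frac{2bm}{2bm+\Omega}\right)^m/(2b)$, $\delta=\frac{\Omega/(2bm+\Omega)}{2b}$. For positive constants $P,g,G_{\mathrm{t}}^{\mathrm{ml}},G_{\mathrm{t}}^{\mathrm{sl}},G_{\mathrm{r}},N_0,W,f_{\mathrm{c}},c,\alpha$ and $R\ge0$, let $\gamma_{s_0}=\frac{PgG_{\mathrm{t}}G_{\mathrm{r}}h(c/(4\pi f_{\mathrm{c}}))^2d_{s_0}^{-\alpha}}{N_0W}$ with $G_{\mathrm{t}}=G_{\mathrm{t}}^{\mathrm{ml}}$ if $d_{s_0}\le d_{\mathrm{th}}$ and $G_{\mathrm{t}}^{\mathrm{sl}}$ otherwise; $\bar P_{\mathrm{out}}=\mathbb{P}[\log_2(1+\gamma_{s_0})<R\mid d_{s_0}\le d_{\mathrm{max}}]$; and $w_1=\frac{16\pi^2f_{\mathrm{c}}^2N_0W(2^R-1)}{Pgc^2G_{\mathrm{t}}^{\mathrm{ml}}G_{\mathrm{r}}}$.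
   Context: $\gamma(s,x)=\int_0^xt^{s-1}e^{-t}dt$ is the lower incomplete Gamma function and $(x)_n=\Gamma(x+n)/\Gamma(x)$. $\bar P_{\mathrm{out}}$ is the paper's Poisson-limit approximation of the outage probability of a system of $S$ satellites, defined as the outage probability when the satellite positions form a homogeneous Poisson point process with mean number $S$ on the sphere; $F_h$ is the shadowed-Rician fading CDF. The right-hand side equals $F_h(w_1a^\alpha)$. *)

theory Defs
  imports "HOL-Probability.Probability"
begin

text \<open>Lower incomplete Gamma function: integral of t^(s-1) e^(-t) over [0,x]
  (equals 0 for x < 0).\<close>
definition lower_inc_gamma :: "real \<Rightarrow> real \<Rightarrow> real" where
  "lower_inc_gamma s x = (LINT t:{0..x}|lborel. t powr (s - 1) * exp (- t))"

definition sr_K :: "real \<Rightarrow> real \<Rightarrow> real \<Rightarrow> real" where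
  "sr_K b m \<Omega> = (2 * b * m / (2 * b * m + \<Omega>)) powr m / (2 * b)"

definition sr_delta :: "real \<Rightarrow> real \<Rightarrow> real \<Rightarrow> real" where
  "sr_delta b m \<Omega> = (\<Omega> / (2 * b * m + \<Omega>)) / (2 * b)"

definition sr_cdf :: "real \<Rightarrow> real \<Rightarrow> real \<Rightarrow> real \<Rightarrow> real" where
  "sr_cdf b m \<Omega> x = sr_K b m \<Omega> *
     (\<Sum>n. pochhammer m n * sr_delta b m \<Omega> ^ n * (2 * b) ^ (1 + n) / (fact n)\<^sup>2
            * lower_inc_gamma (1 + real n) (x / (2 * b)))"

text \<open>Uniform probability distribution on the sphere of radius rho centred at the
  origin of R^3: radial projection of the uniform distribution on the unit ball.\<close>
definition sphere_unif :: "real \<Rightarrow> (real^3) measure" where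
  "sphere_unif \<rho> = distr (uniform_measure lborel (cball 0 1)) borel (\<lambda>x. (\<rho> / norm x) *\<^sub>R x)"

definition nearest_dist :: "real^3 \<Rightarrow> nat \<Rightarrow> (nat \<Rightarrow> real^3) \<Rightarrow> real" where
  "nearest_dist u n x = Min ((\<lambda>i. dist (x i) u) ` {..<n})"

text \<open>Probability of an event E (depending on the number n of points, the points x,
  and the fading h) when the points form a homogeneous Poisson point process with mean
  number S on the sphere of radius rho (standard construction: Poisson(S) many i.i.d.
  uniform points) and h is independent with distribution Mh.\<close>
definition ppp_prob :: "real \<Rightarrow> real \<Rightarrow> real measure \<Rightarrow>
    (nat \<Rightarrow> (nat \<Rightarrow> real^3) \<Rightarrow> real \<Rightarrow> bool) \<Rightarrow> real" where
  "ppp_prob S \<rho> Mh E =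
     (\<Sum>n. S ^ n / fact n * exp (- S) *
        measure (PiM {..<n} (\<lambda>_. sphere_unif \<rho>) \<Otimes>\<^sub>M Mh)
          {p \<in> space (PiM {..<n} (\<lambda>_. sphere_unif \<rho>) \<Otimes>\<^sub>M Mh). E n (fst p) (snd p)})"

end

theory Submission
  imports Defs "HOL-Real_Asymp.Real_Asymp"
begin


definition pf :: "real \<Rightarrow> real^3 \<Rightarrow> real^3" where
  "pf \<rho> x = (\<rho> / norm x) *\<^sub>R x"

lemma pf_meas[measurable]: "pf \<rho> \<in> borel_measurable borel"
  unfolding pf_def by measurable

lemma pf_vimage[measurable]: "A \<in> sets borel \<Longrightarrow> pf \<rho> -` A \<in> sets borel"
  using measurable_sets[OF pf_meas, of A \<rho>] by simp

lemma cball_meas_pos: "emeasure lborel (cball (0::real^3) 1) \<noteq> 0"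
  "emeasure lborel (cball (0::real^3) 1) \<noteq> \<infinity>"
proof -
  have "measure lborel (cball (0::real^3) 1) > 0" by (rule content_cball_pos) simp
  then show "emeasure lborel (cball (0::real^3) 1) \<noteq> 0"
    by (metis enn2real_0 measure_def less_irrefl)
  show "emeasure lborel (cball (0::real^3) 1) \<noteq> \<infinity>"
    by (metis emeasure_lborel_cball_finite less_irrefl infinity_ennreal_def)
qed

lemma sphere_unif_alt: "sphere_unif \<rho> = distr (uniform_measure lborel (cball 0 1)) borel (pf \<rho>)"
  unfolding sphere_unif_def pf_def ..

lemma sphere_prob: "prob_space (sphere_unif \<rho>)"
  unfolding sphere_unif_alt
  by (intro prob_space.prob_space_distr prob_space_uniform_measure cball_meas_pos) simp

lemma sphere_sets[simp]: "sets (sphere_unif \<rho>) = sets borel"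
  unfolding sphere_unif_alt by simp

lemma sphere_space[simp]: "space (sphere_unif \<rho>) = UNIV"
  unfolding sphere_unif_alt by simp

lemma sphere_measure:
  assumes "A \<in> sets borel"
  shows "measure (sphere_unif \<rho>) A = measure lborel (cball 0 1 \<inter> pf \<rho> -` A) / measure lborel (cball (0::real^3) 1)"
proof -
  have "measure (sphere_unif \<rho>) A = measure (uniform_measure lborel (cball 0 1)) (pf \<rho> -` A)"
    unfolding sphere_unif_alt using assms by (subst measure_distr) auto
  also have "\<dots> = measure lborel (cball 0 1 \<inter> pf \<rho> -` A) / measure lborel (cball (0::real^3) 1)"
    using assms cball_meas_pos pf_vimage by (subst measure_uniform_measure) auto
  finally show ?thesis .
qed


lemma cball_set: "{y. dist y u \<le> t} = cball u t" by (auto simp: dist_commute)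

lemma dist_sets[measurable]: "{y. dist y (u::real^3) \<le> t} \<in> sets borel" "{y. t < dist y (u::real^3)} \<in> sets borel"
proof -
  show "{y. dist y (u::real^3) \<le> t} \<in> sets borel" unfolding cball_set by (rule borel_closed) simp
  have "{y. t < dist y (u::real^3)} = - cball u t" by (auto simp: dist_commute)
  then show "{y. t < dist y (u::real^3)} \<in> sets borel" by (simp add: borel_open)
qed

lemma norm_diff_sq: "(norm (y - u::real^3))^2 = (norm y)^2 + (norm u)^2 - 2 * (y \<bullet> u)"
  by (simp add: power2_norm_eq_inner algebra_simps inner_commute)

lemma geo_line:
  assumes re: "re > 0" "a > 0" "norm u = re" and x: "dist (pf (re + a) x) u \<le> a"
  shows "x \<in> span {u}"
proof (cases "x = 0")
  case True then show ?thesis by (simp add: span_zero)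
next
  case False
  define y where "y = pf (re + a) x"
  have ny: "norm y = re + a" using False re by (simp add: y_def pf_def)
  have "(norm (y - u))^2 \<le> a^2" using x re by (simp add: y_def dist_norm power_mono)
  then have "(re+a)^2 + re^2 - 2 * (y \<bullet> u) \<le> a^2" using ny re by (simp add: norm_diff_sq)
  then have "y \<bullet> u \<ge> norm y * norm u" using ny re by (simp add: power2_eq_square algebra_simps)
  moreover have "y \<bullet> u \<le> norm y * norm u" by (rule norm_cauchy_schwarz)
  ultimately have "y \<bullet> u = norm y * norm u" by simp
  then have "norm y *\<^sub>R u = norm u *\<^sub>R y" by (simp add: norm_cauchy_schwarz_eq)
  then have yu: "y = ((re + a) / re) *\<^sub>R u" using ny re
    by (metis divide_inverse_commute less_irrefl scaleR_scaleR vector_fraction_eq_iff)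
  have "x = (norm x / (re + a)) *\<^sub>R y" using False re by (simp add: y_def pf_def)
  also have "\<dots> = (norm x / (re + a) * ((re + a) / re)) *\<^sub>R u" by (simp add: yu)
  finally show ?thesis by (metis span_base span_mul singletonI)
qed

lemma sphere_null:
  assumes re: "re > 0" "a > 0" "norm u = re"
  shows "measure (sphere_unif (re + a)) {y. dist y u \<le> a} = 0"
proof -
  define S where "S = cball 0 1 \<inter> pf (re + a) -` {y. dist y u \<le> a}"
  have Ssub: "S \<subseteq> span {u}" using geo_line[OF re] by (auto simp: S_def)
  have "dim (span {u}) \<le> card {u}" by (rule dim_le_card) auto
  then have "dim (span {u}) < DIM(real^3)" by simp
  then have "negligible (span {u})" by (rule negligible_lowdim)
  then have "negligible S" using Ssub negligible_subset by blast
  then have "measure lebesgue S = 0" by (rule negligible_imp_measure0)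
  moreover have "S \<in> sets borel" unfolding S_def by measurable
  ultimately have "measure lborel S = 0"
    by (metis measure_completion sets_lborel)
  then show ?thesis by (subst sphere_measure) (auto simp: S_def)
qed

lemma sphere_pos:
  assumes re: "re > 0" "a > 0" "norm u = re" and t: "t > a"
  shows "measure (sphere_unif (re + a)) {y. dist y u \<le> t} > 0"
proof -
  define x0 where "x0 = (1 / (2 * re)) *\<^sub>R u"
  have nx0: "norm x0 = 1/2" using re by (simp add: x0_def)
  have px0: "pf (re + a) x0 = ((re + a) / re) *\<^sub>R u" using re nx0 by (simp add: pf_def x0_def field_simps)
  have "(re + a) / re - 1 = a / re" using re by (simp add: field_simps)
  then have "pf (re + a) x0 - u = (a / re) *\<^sub>R u" unfolding px0
    by (metis scaleR_diff_left scaleR_one)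
  then have "dist (pf (re + a) x0) u = norm ((a / re) *\<^sub>R u)"
    by (simp add: dist_norm)
  also have "\<dots> = a" using re by simp
  finally have d0: "dist (pf (re + a) x0) u = a" .
  have "isCont (pf (re + a)) x0" unfolding pf_def using nx0
    by (intro continuous_intros) auto
  then obtain \<delta> where \<delta>: "\<delta> > 0" "\<And>x'. dist x' x0 < \<delta> \<Longrightarrow> dist (pf (re+a) x') (pf (re+a) x0) < t - a"
    using t unfolding continuous_at_eps_delta by (meson diff_gt_0_iff_gt)
  define \<delta>' where "\<delta>' = min \<delta> (1/2)"
  define S where "S = cball 0 1 \<inter> pf (re + a) -` {y. dist y u \<le> t}"
  have sub: "ball x0 \<delta>' \<subseteq> S"
  proof
    fix x assume "x \<in> ball x0 \<delta>'"
    then have dx: "dist x0 x < \<delta>" "dist x0 x < 1/2" by (auto simp: \<delta>'_def)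
    have "norm x \<le> norm x0 + dist x0 x" by (metis dist_norm norm_triangle_sub dist_commute)
    then have "norm x \<le> 1" using nx0 dx by simp
    moreover have "dist (pf (re+a) x) u \<le> t"
      using \<delta>(2)[of x] dx d0 dist_triangle[of "pf (re+a) x" u "pf (re+a) x0"]
      by (simp add: dist_commute)
    ultimately show "x \<in> S" by (simp add: S_def)
  qed
  have Sb: "S \<in> sets borel" unfolding S_def by measurable
  have "S \<in> fmeasurable lborel"
  proof (rule fmeasurableI2[of "cball 0 1"])
    show "cball (0::real^3) 1 \<in> fmeasurable lborel"
      by (intro fmeasurableI emeasure_lborel_cball_finite) simp
  qed (auto simp: S_def Sb)
  then have le: "measure lborel (ball x0 \<delta>') \<le> measure lborel S"
    using sub by (intro measure_mono_fmeasurable) auto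
  have p1: "measure lborel (ball x0 \<delta>') > 0" using \<delta> by (intro content_ball_pos) (simp add: \<delta>'_def)
  have p2: "measure lborel (cball (0::real^3) 1) > 0" by (rule content_cball_pos) simp
  have "measure lborel S > 0" using le p1 by linarith
  note this p2
  moreover have "measure (sphere_unif (re + a)) {y. dist y u \<le> t} = measure lborel S / measure lborel (cball (0::real^3) 1)"
    unfolding S_def by (rule sphere_measure) simp
  ultimately show ?thesis by simp
qed


abbreviation PP :: "real \<Rightarrow> nat \<Rightarrow> (nat \<Rightarrow> real^3) measure" where
  "PP \<rho> n \<equiv> PiM {..<n} (\<lambda>_. sphere_unif \<rho>)"

lemma PP_prob: "prob_space (PP \<rho> n)"
  by (intro prob_space_PiM sphere_prob)

lemma PP_space: "space (PP \<rho> n) = PiE {..<n} (\<lambda>_. UNIV)"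
  by (simp add: space_PiM)

lemma PP_box_sets: "A \<in> sets borel \<Longrightarrow> PiE {..<n} (\<lambda>_. A) \<in> sets (PP \<rho> n)"
  by (intro sets_PiM_I_finite) auto

lemma PP_box: assumes "A \<in> sets borel"
  shows "measure (PP \<rho> n) (PiE {..<n} (\<lambda>_. A)) = measure (sphere_unif \<rho>) A ^ n"
proof -
  interpret S: prob_space "sphere_unif \<rho>" by (rule sphere_prob)
  interpret product_prob_space "\<lambda>_. sphere_unif \<rho>" "{..<n}"
    by unfold_locales
  interpret finite_product_sigma_finite "\<lambda>_. sphere_unif \<rho>" "{..<n}"
    by unfold_locales simp
  have "emeasure (PP \<rho> n) (PiE {..<n} (\<lambda>_. A)) = (\<Prod>i<n. emeasure (sphere_unif \<rho>) A)"
    using assms by (subst measure_times) auto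
  also have "\<dots> = ennreal (measure (sphere_unif \<rho>) A ^ n)"
    by (simp add: S.emeasure_eq_measure ennreal_power)
  finally show ?thesis by (simp add: measure_def)
qed


lemma nd_meas[measurable]: "nearest_dist u n \<in> borel_measurable (PP \<rho> n)"
  unfolding nearest_dist_def
proof (rule borel_measurable_Min)
  fix i assume "i \<in> {..<n}"
  then have "(\<lambda>x. x i) \<in> measurable (PP \<rho> n) (sphere_unif \<rho>)"
    by (intro measurable_component_singleton) auto
  then have m: "(\<lambda>x. x i) \<in> borel_measurable (PP \<rho> n)"
    using measurable_cong_sets[OF refl sphere_sets] by blast
  have d: "(\<lambda>y. dist y u) \<in> borel_measurable borel"
    by (intro borel_measurable_continuous_onI continuous_intros)
  show "(\<lambda>x. dist (x i) u) \<in> borel_measurable (PP \<rho> n)"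
    using measurable_compose[OF m d] by simp
qed simp


lemma pair_times:
  assumes "prob_space Mh" "A \<in> sets (PP \<rho> n)" "B \<in> sets Mh"
  shows "measure (PP \<rho> n \<Otimes>\<^sub>M Mh) (A \<times> B) = measure (PP \<rho> n) A * measure Mh B"
proof -
  interpret H: prob_space Mh by fact
  interpret P: prob_space "PP \<rho> n" by (rule PP_prob)
  have "emeasure (PP \<rho> n \<Otimes>\<^sub>M Mh) (A \<times> B) = emeasure (PP \<rho> n) A * emeasure Mh B"
    using assms by (intro H.emeasure_pair_measure_Times) auto
  then have "emeasure (PP \<rho> n \<Otimes>\<^sub>M Mh) (A \<times> B) = ennreal (measure (PP \<rho> n) A * measure Mh B)"
    by (simp add: H.emeasure_eq_measure P.emeasure_eq_measure ennreal_mult'')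
  then show ?thesis by (simp add: measure_def)
qed


lemma ev_meas:
  assumes "sets Mh = sets borel"
  shows "{p \<in> space (PP \<rho> n \<Otimes>\<^sub>M Mh). n \<ge> 1 \<and> nearest_dist u n (fst p) \<le> dmax \<and>
           log 2 (1 + P * g * (if nearest_dist u n (fst p) \<le> dth then Gml else Gsl) * Gr * snd p
                       * (c / (4 * pi * fc))\<^sup>2 * nearest_dist u n (fst p) powr (- \<alpha>) / (N0 * W)) < R}
        \<in> sets (PP \<rho> n \<Otimes>\<^sub>M Mh)" (is ?A)
   and "{p \<in> space (PP \<rho> n \<Otimes>\<^sub>M Mh). n \<ge> 1 \<and> nearest_dist u n (fst p) \<le> dmax} \<in> sets (PP \<rho> n \<Otimes>\<^sub>M Mh)" (is ?B)
proof -
  have h: "(\<lambda>h. h) \<in> borel_measurable Mh" using measurable_cong_sets[OF assms refl, of borel] by (metis measurable_ident_sets refl)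
  have D: "(\<lambda>p. nearest_dist u n (fst p)) \<in> borel_measurable (PP \<rho> n \<Otimes>\<^sub>M Mh)"
    by (rule measurable_compose[OF measurable_fst nd_meas])
  have H: "(\<lambda>p. snd p) \<in> borel_measurable (PP \<rho> n \<Otimes>\<^sub>M Mh)"
    by (rule measurable_compose[OF measurable_snd h])
  show ?A using D H by measurable
  show ?B using D by measurable
qed


lemma lig0: "lower_inc_gamma s 0 = 0"
proof -
  have "AE x in lborel. indicator {0..0::real} x *\<^sub>R (x powr (s - 1) * exp (- x)) = 0"
    using AE_lborel_singleton[of 0] by eventually_elim auto
  then show ?thesis unfolding lower_inc_gamma_def set_lebesgue_integral_def
    by (rule integral_eq_zero_AE)
qed

lemma sr_cdf0: "sr_cdf b m \<Omega> 0 = 0"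
  by (simp add: sr_cdf_def lig0)

lemma key_equiv:
  assumes "P > 0" "g > 0" "Gml > 0" "Gr > 0" "N0 > 0" "W > 0" "fc > 0" "c > 0"
    and w1: "w1 = 16 * pi\<^sup>2 * fc\<^sup>2 * N0 * W * (2 powr R - 1) / (P * g * c\<^sup>2 * Gml * Gr)"
    and h: "h > 0" and D: "D > 0"
  shows "log 2 (1 + P * g * Gml * Gr * h * (c / (4 * pi * fc))\<^sup>2 * D powr (- \<alpha>) / (N0 * W)) < R
         \<longleftrightarrow> h < w1 * D powr \<alpha>"
proof -
  define Kp where "Kp = P * g * Gml * Gr * (c / (4 * pi * fc))\<^sup>2 / (N0 * W)"
  have Kp: "Kp > 0" using assms by (simp add: Kp_def)
  have Kw: "Kp * w1 = 2 powr R - 1"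
    using assms unfolding Kp_def by (simp add: field_simps power2_eq_square)
  have e: "P * g * Gml * Gr * h * (c / (4 * pi * fc))\<^sup>2 * D powr (- \<alpha>) / (N0 * W) = Kp * (h / D powr \<alpha>)"
    by (simp add: Kp_def powr_minus field_simps)
  have pos: "Kp * (h / D powr \<alpha>) > 0" using Kp h D by simp
  have "log 2 (1 + Kp * (h / D powr \<alpha>)) < R \<longleftrightarrow> 1 + Kp * (h / D powr \<alpha>) < 2 powr R"
    using pos by (intro log_less_iff) auto
  also have "\<dots> \<longleftrightarrow> Kp * (h / D powr \<alpha>) < Kp * w1" using Kw by linarith
  also have "\<dots> \<longleftrightarrow> h / D powr \<alpha> < w1" using Kp by (metis mult_less_cancel_left_pos)
  also have "\<dots> \<longleftrightarrow> h < w1 * D powr \<alpha>" using D by (simp add: divide_less_eq)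
  finally show ?thesis by (simp add: e)
qed


locale setting =
  fixes re a :: real and u :: "real^3" and Mh :: "real measure"
    and dmax dth b m \<Omega> P g Gml Gsl Gr N0 W fc c \<alpha> R w1 :: real
  assumes re: "re > 0" "a > 0" "norm u = re" and dd: "a < dth" "dth \<le> dmax"
    and Mhp: "prob_space Mh" and Mhs: "sets Mh = sets borel" and Mhc: "\<And>x. measure Mh {..x} = sr_cdf b m \<Omega> x"
    and pos: "P > 0" "g > 0" "Gml > 0" "Gsl > 0" "Gr > 0" "N0 > 0" "W > 0" "fc > 0" "c > 0" "\<alpha> > 0"
    and R: "R \<ge> 0"
    and w1: "w1 = 16 * pi\<^sup>2 * fc\<^sup>2 * N0 * W * (2 powr R - 1) / (P * g * c\<^sup>2 * Gml * Gr)"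
begin

definition Enum :: "nat \<Rightarrow> (nat \<Rightarrow> real^3) \<Rightarrow> real \<Rightarrow> bool" where
  "Enum = (\<lambda>n x h. n \<ge> 1 \<and> nearest_dist u n x \<le> dmax \<and>
           log 2 (1 + P * g * (if nearest_dist u n x \<le> dth then Gml else Gsl) * Gr * h
                       * (c / (4 * pi * fc))\<^sup>2 * nearest_dist u n x powr (- \<alpha>) / (N0 * W)) < R)"

definition Eden :: "nat \<Rightarrow> (nat \<Rightarrow> real^3) \<Rightarrow> real \<Rightarrow> bool" where
  "Eden = (\<lambda>n x h. n \<ge> 1 \<and> nearest_dist u n x \<le> dmax)"

abbreviation X :: "nat \<Rightarrow> ((nat \<Rightarrow> real^3) \<times> real) measure" where
  "X n \<equiv> PP (re + a) n \<Otimes>\<^sub>M Mh"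

definition Num :: "nat \<Rightarrow> real" where
  "Num n = measure (X n) {p \<in> space (X n). Enum n (fst p) (snd p)}"

definition Den :: "nat \<Rightarrow> real" where
  "Den n = measure (X n) {p \<in> space (X n). Eden n (fst p) (snd p)}"

definition rr :: "real \<Rightarrow> real" where
  "rr t = measure (sphere_unif (re + a)) {y. t < dist y u}"

definition Box :: "nat \<Rightarrow> real \<Rightarrow> (nat \<Rightarrow> real^3) set" where
  "Box n t = PiE {..<n} (\<lambda>_. {y. t < dist y u})"

lemma Mh_space: "space Mh = UNIV"
  using sets_eq_imp_space_eq[OF Mhs] by simp

lemma X_prob: "prob_space (X n)"
  by (intro prob_space_pair PP_prob Mhp)

lemma X_space: "space (X n) = space (PP (re + a) n) \<times> UNIV"
  by (simp add: space_pair_measure Mh_space)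

lemma w1_nn: "w1 \<ge> 0"
proof -
  have "2 powr R \<ge> 1" using R by (simp add: ge_one_powr_ge_zero)
  then show ?thesis unfolding w1 using pos by simp
qed

lemma F_nn: "sr_cdf b m \<Omega> x \<ge> 0"
  using Mhc[of x] by (metis measure_nonneg)

lemma rr_compl: "rr t = 1 - measure (sphere_unif (re + a)) {y. dist y u \<le> t}"
proof -
  interpret S: prob_space "sphere_unif (re + a)" by (rule sphere_prob)
  have "{y. t < dist y u} = space (sphere_unif (re + a)) - {y. dist y u \<le> t}" by auto
  moreover have ev: "{y. dist y u \<le> t} \<in> S.events" using dist_sets by simp
  have "S.prob (space (sphere_unif (re + a)) - {y. dist y u \<le> t}) = 1 - S.prob {y. dist y u \<le> t}"
    by (rule S.prob_compl[OF ev])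
  ultimately show ?thesis unfolding rr_def by metis
qed

lemma rr_a: "rr a = 1"
  unfolding rr_compl using sphere_null[OF re] by simp

lemma rr_lt: "t > a \<Longrightarrow> rr t < 1"
  unfolding rr_compl using sphere_pos[OF re] by simp

lemma rr_nn: "rr t \<ge> 0"
  unfolding rr_def by simp

lemma Box_sets: "Box n t \<in> sets (PP (re + a) n)"
  unfolding Box_def by (intro PP_box_sets dist_sets)

lemma Box_meas: "measure (PP (re + a) n) (Box n t) = rr t ^ n"
  unfolding Box_def rr_def by (intro PP_box dist_sets)

lemma Box_iff:
  assumes "n \<ge> 1" "x \<in> space (PP (re + a) n)"
  shows "x \<in> Box n t \<longleftrightarrow> t < nearest_dist u n x"
proof -
  have ne: "(\<lambda>i. dist (x i) u) ` {..<n} \<noteq> {}" using assms(1) by (metis image_is_empty lessThan_empty_iff not_one_le_zero)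
  have "t < nearest_dist u n x \<longleftrightarrow> (\<forall>i<n. t < dist (x i) u)"
    unfolding nearest_dist_def using ne by (subst Min_gr_iff) auto
  moreover have "x \<in> Box n t \<longleftrightarrow> (\<forall>i<n. t < dist (x i) u)"
    using assms(2) by (auto simp: Box_def PP_space PiE_iff)
  ultimately show ?thesis by simp
qed

end


context setting begin

lemma X_sets_times: "A \<in> sets (PP (re + a) n) \<Longrightarrow> B \<in> sets borel \<Longrightarrow> A \<times> B \<in> sets (X n)"
  using Mhs by (intro pair_measureI) auto

lemma X_times: "A \<in> sets (PP (re + a) n) \<Longrightarrow> B \<in> sets borel \<Longrightarrow>
   measure (X n) (A \<times> B) = measure (PP (re + a) n) A * measure Mh B"
  using Mhs by (intro pair_times Mhp) auto

lemma Num_set: "{p \<in> space (X n). Enum n (fst p) (snd p)} \<in> sets (X n)"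
  unfolding Enum_def by (rule ev_meas(1)[OF Mhs])

lemma Den_set: "{p \<in> space (X n). Eden n (fst p) (snd p)} \<in> sets (X n)"
  unfolding Eden_def by (rule ev_meas(2)[OF Mhs])

lemma Den_le1: "Den n \<le> 1"
  unfolding Den_def by (rule prob_space.prob_le_1[OF X_prob])

lemma Num_nn: "Num n \<ge> 0" unfolding Num_def by simp
lemma Den_nn: "Den n \<ge> 0" unfolding Den_def by simp

lemma PP_le1: "measure (PP (re + a) n) A \<le> 1"
  by (rule prob_space.prob_le_1[OF PP_prob])

lemma compl_meas: "measure (PP (re + a) n) (space (PP (re + a) n) - Box n t) = 1 - rr t ^ n"
  using prob_space.prob_compl[OF PP_prob Box_sets] Box_meas by simp

lemma gain_eq: "nearest_dist u n x \<le> dth \<Longrightarrow>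
   P * g * (if nearest_dist u n x \<le> dth then Gml else Gsl) * Gr * h
                       * (c / (4 * pi * fc))\<^sup>2 * nearest_dist u n x powr (- \<alpha>) / (N0 * W)
   = P * g * Gml * Gr * h * (c / (4 * pi * fc))\<^sup>2 * nearest_dist u n x powr (- \<alpha>) / (N0 * W)"
  by simp

lemma keq: "h > 0 \<Longrightarrow> D > 0 \<Longrightarrow>
  log 2 (1 + P * g * Gml * Gr * h * (c / (4 * pi * fc))\<^sup>2 * D powr (- \<alpha>) / (N0 * W)) < R
         \<longleftrightarrow> h < w1 * D powr \<alpha>"
  using pos by (intro key_equiv w1) auto

lemma Den_lower:
  assumes t: "a < t" "t \<le> dth"
  shows "1 - rr t ^ n \<le> Den n"
proof (cases "n = 0")
  case True then show ?thesis by (simp add: Den_nn)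
next
  case False
  then have n: "n \<ge> 1" by simp
  let ?SP = "space (PP (re + a) n)"
  have sub: "(?SP - Box n t) \<times> UNIV \<subseteq> {p \<in> space (X n). Eden n (fst p) (snd p)}"
  proof safe
    fix x h assume x: "x \<in> ?SP" "x \<notin> Box n t"
    then have "nearest_dist u n x \<le> t" using Box_iff[OF n x(1)] by simp
    then show "Eden n (fst (x, h)) (snd (x, h))" using n t dd by (simp add: Eden_def)
    show "(x, h) \<in> space (X n)" using x by (simp add: X_space)
  qed
  have "measure (X n) ((?SP - Box n t) \<times> UNIV) = 1 - rr t ^ n"
    using Box_sets compl_meas prob_space.prob_space[OF Mhp] Mh_space
    by (subst X_times) auto
  moreover have "measure (X n) ((?SP - Box n t) \<times> UNIV) \<le> Den n"
    unfolding Den_def using sub Den_set by (intro finite_measure.finite_measure_mono prob_space.finite_measure X_prob)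
  ultimately show ?thesis by simp
qed

end


context setting begin

lemma Num_upper:
  assumes t: "a < t" "t \<le> dth"
  shows "Num n \<le> sr_cdf b m \<Omega> (w1 * t powr \<alpha>) + rr t ^ n"
proof (cases "n = 0")
  case True
  then have "Num n = 0" by (simp add: Num_def Enum_def)
  then show ?thesis using F_nn rr_nn by simp
next
  case False
  then have n: "n \<ge> 1" by simp
  let ?SP = "space (PP (re + a) n)"
  define A1 where "A1 = (?SP - Box n t) \<times> {..w1 * t powr \<alpha>}"
  define A2 where "A2 = Box n t \<times> (UNIV :: real set)"
  define A3 where "A3 = (?SP - Box n a) \<times> (UNIV :: real set)"
  have sub: "{p \<in> space (X n). Enum n (fst p) (snd p)} \<subseteq> A1 \<union> A2 \<union> A3"
  proof safe
    fix x h assume x: "(x, h) \<in> space (X n)" and E: "Enum n (fst (x, h)) (snd (x, h))"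
      and n2: "(x, h) \<notin> A2" "(x, h) \<notin> A3"
    have xs: "x \<in> ?SP" using x by (simp add: X_space)
    have D1: "nearest_dist u n x \<le> t" using n2 Box_iff[OF n xs] by (auto simp: A2_def)
    have D2: "a < nearest_dist u n x" using n2 Box_iff[OF n xs] xs by (auto simp: A3_def)
    have "h \<le> w1 * t powr \<alpha>"
    proof (cases "h > 0")
      case False
      then show ?thesis using w1_nn by (smt (verit) mult_nonneg_nonneg powr_ge_zero)
    next
      case True
      have Dp: "nearest_dist u n x > 0" using D2 re by simp
      have "log 2 (1 + P * g * Gml * Gr * h * (c / (4 * pi * fc))\<^sup>2 * nearest_dist u n x powr (- \<alpha>) / (N0 * W)) < R"
        using E D1 t by (simp add: Enum_def)
      then have "h < w1 * nearest_dist u n x powr \<alpha>" using keq[OF True Dp] by simp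
      also have "\<dots> \<le> w1 * t powr \<alpha>"
        using w1_nn D1 Dp pos by (intro mult_left_mono powr_mono2) auto
      finally show ?thesis by simp
    qed
    then show "(x, h) \<in> A1" using xs D1 Box_iff[OF n xs] by (simp add: A1_def)
  qed
  interpret XP: prob_space "X n" by (rule X_prob)
  interpret HP: prob_space Mh by (rule Mhp)
  have s1: "A1 \<in> sets (X n)" unfolding A1_def using Box_sets by (intro X_sets_times) auto
  have s2: "A2 \<in> sets (X n)" unfolding A2_def using Box_sets by (intro X_sets_times) auto
  have s3: "A3 \<in> sets (X n)" unfolding A3_def using Box_sets by (intro X_sets_times) auto
  have "Num n \<le> measure (X n) (A1 \<union> A2 \<union> A3)"
    unfolding Num_def using sub s1 s2 s3 by (intro XP.finite_measure_mono) auto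
  also have "\<dots> \<le> measure (X n) (A1 \<union> A2) + measure (X n) A3"
    using s1 s2 s3 by (intro measure_Un_le) auto
  also have "\<dots> \<le> measure (X n) A1 + measure (X n) A2 + measure (X n) A3"
    using s1 s2 by (simp add: measure_Un_le)
  also have "measure (X n) A1 = (1 - rr t ^ n) * sr_cdf b m \<Omega> (w1 * t powr \<alpha>)"
    unfolding A1_def using Box_sets compl_meas Mhc by (subst X_times) auto
  also have "measure (X n) A2 = rr t ^ n"
    unfolding A2_def using Box_sets Box_meas HP.prob_space Mh_space by (subst X_times) auto
  also have "measure (X n) A3 = 0"
    unfolding A3_def using Box_sets compl_meas rr_a by (subst X_times) auto
  also have "(1 - rr t ^ n) * sr_cdf b m \<Omega> (w1 * t powr \<alpha>) \<le> sr_cdf b m \<Omega> (w1 * t powr \<alpha>)"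
  proof -
    have "0 \<le> rr t ^ n * sr_cdf b m \<Omega> (w1 * t powr \<alpha>)" using F_nn rr_nn by simp
    then show ?thesis by (simp add: left_diff_distrib)
  qed
  finally show ?thesis by simp
qed

end


context setting begin

lemma Num_lower:
  assumes t: "a < t" "t \<le> dth"
  shows "(1 - rr t ^ n) * sr_cdf b m \<Omega> (w1 * a powr \<alpha>) \<le> Num n"
proof (cases "n = 0 \<or> w1 = 0")
  case True
  then have "(1 - rr t ^ n) * sr_cdf b m \<Omega> (w1 * a powr \<alpha>) = 0"
    by (elim disjE) (simp_all add: sr_cdf0)
  then show ?thesis using Num_nn[of n] by linarith
next
  case False
  then have n: "n \<ge> 1" and w: "w1 > 0" using w1_nn by auto
  let ?SP = "space (PP (re + a) n)"
  define B where "B = (Box n a - Box n t) \<times> {0<..w1 * a powr \<alpha>}"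
  have sub: "B \<subseteq> {p \<in> space (X n). Enum n (fst p) (snd p)}"
  proof safe
    fix x h assume xh: "(x, h) \<in> B"
    have "Box n a \<subseteq> ?SP" unfolding Box_def PP_space by (rule PiE_mono) auto
    then have xs: "x \<in> ?SP" using xh unfolding B_def by blast
    then show "(x, h) \<in> space (X n)" by (simp add: X_space)
    have D1: "nearest_dist u n x \<le> t" using xh Box_iff[OF n xs] by (auto simp: B_def)
    have D2: "a < nearest_dist u n x" using xh Box_iff[OF n xs] by (auto simp: B_def)
    have h: "0 < h" "h \<le> w1 * a powr \<alpha>" using xh by (auto simp: B_def)
    have Dp: "nearest_dist u n x > 0" using D2 re by simp
    have "w1 * a powr \<alpha> < w1 * nearest_dist u n x powr \<alpha>"
      using w D2 re pos by (intro mult_strict_left_mono powr_less_mono2) auto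
    then have "h < w1 * nearest_dist u n x powr \<alpha>" using h by simp
    then have "log 2 (1 + P * g * Gml * Gr * h * (c / (4 * pi * fc))\<^sup>2 * nearest_dist u n x powr (- \<alpha>) / (N0 * W)) < R"
      using keq[OF h(1) Dp] by simp
    then show "Enum n (fst (x, h)) (snd (x, h))" using D1 t dd n by (simp add: Enum_def)
  qed
  interpret XP: prob_space "X n" by (rule X_prob)
  interpret HP: prob_space Mh by (rule Mhp)
  interpret PPP: prob_space "PP (re + a) n" by (rule PP_prob)
  have bs: "Box n t \<subseteq> Box n a" unfolding Box_def by (rule PiE_mono) (use t in auto)
  have m1: "measure (PP (re + a) n) (Box n a - Box n t) = 1 - rr t ^ n"
    using PPP.finite_measure_Diff[OF Box_sets Box_sets bs] Box_meas rr_a by simp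
  have e: "{0<..w1 * a powr \<alpha>} = {..w1 * a powr \<alpha>} - {..0}" by (simp add: set_eq_iff not_le conj_commute)
  have m2: "measure Mh {0<..w1 * a powr \<alpha>} = sr_cdf b m \<Omega> (w1 * a powr \<alpha>)"
    unfolding e using Mhs Mhc sr_cdf0 w by (subst HP.finite_measure_Diff) auto
  have "measure (X n) B = (1 - rr t ^ n) * sr_cdf b m \<Omega> (w1 * a powr \<alpha>)"
    unfolding B_def using Box_sets m1 m2 by (subst X_times) auto
  moreover have "measure (X n) B \<le> Num n"
    unfolding Num_def using sub Num_set by (intro XP.finite_measure_mono)
  ultimately show ?thesis by simp
qed

end


lemma poisson_sums: "(\<lambda>n. (S::real) ^ n / fact n * exp (- S) * c ^ n) sums exp (S * (c - 1))"
proof -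
  have "(\<lambda>n. (S * c) ^ n /\<^sub>R fact n) sums exp (S * c)" by (rule exp_converges)
  then have "(\<lambda>n. (S * c) ^ n /\<^sub>R fact n * exp (- S)) sums (exp (S * c) * exp (- S))"
    by (rule sums_mult2)
  moreover have "exp (S * c) * exp (- S) = exp (S * (c - 1))"
  proof -
    have "exp (S * c) * exp (- S) = exp (S * c + - S)" by (rule exp_add[symmetric])
    also have "S * c + - S = S * (c - 1)" by (simp add: algebra_simps)
    finally show ?thesis .
  qed
  moreover have "\<And>n. (S * c) ^ n /\<^sub>R fact n * exp (- S) = S ^ n / fact n * exp (- S) * c ^ n"
    by (simp add: power_mult_distrib divide_inverse)
  ultimately show ?thesis by simp
qed

context setting begin

definition wS :: "real \<Rightarrow> nat \<Rightarrow> real" where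
  "wS S n = S ^ n / fact n * exp (- S)"

lemma wS_nn: "S \<ge> 0 \<Longrightarrow> wS S n \<ge> 0" unfolding wS_def by simp

lemma wS_sums_c: "(\<lambda>n. wS S n * q ^ n) sums exp (S * (q - 1))"
  unfolding wS_def by (rule poisson_sums)

lemma wS_sums1: "wS S sums 1"
  using wS_sums_c[of S 1] by simp

lemma Num_le1: "Num n \<le> 1"
  unfolding Num_def by (rule prob_space.prob_le_1[OF X_prob])

lemma summ_Num: "S \<ge> 0 \<Longrightarrow> summable (\<lambda>n. wS S n * Num n)"
proof (rule summable_comparison_test'[where N=0])
  show "summable (wS S)" by (rule sums_summable[OF wS_sums1])
  fix n :: nat assume S: "S \<ge> 0"
  have "wS S n * Num n \<le> wS S n" using wS_nn[OF S] Num_nn Num_le1 by (simp add: mult_left_le)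
  then show "norm (wS S n * Num n) \<le> wS S n" using wS_nn[OF S] Num_nn by simp
qed

end


context setting begin

lemma Den_le1': "Den n \<le> 1" by (rule Den_le1)

lemma summ_Den: "S \<ge> 0 \<Longrightarrow> summable (\<lambda>n. wS S n * Den n)"
proof (rule summable_comparison_test'[where N=0])
  show "summable (wS S)" by (rule sums_summable[OF wS_sums1])
  fix n :: nat assume S: "S \<ge> 0"
  have "wS S n * Den n \<le> wS S n" using wS_nn[OF S] Den_nn Den_le1 by (simp add: mult_left_le)
  then show "norm (wS S n * Den n) \<le> wS S n" using wS_nn[OF S] Den_nn by simp
qed

lemma NS_upper:
  assumes S: "S \<ge> 0" and t: "a < t" "t \<le> dth"
  shows "(\<Sum>n. wS S n * Num n) \<le> sr_cdf b m \<Omega> (w1 * t powr \<alpha>) + exp (S * (rr t - 1))"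
proof -
  let ?F = "sr_cdf b m \<Omega> (w1 * t powr \<alpha>)"
  have A: "(\<lambda>n. wS S n * ?F + wS S n * rr t ^ n) sums (1 * ?F + exp (S * (rr t - 1)))"
    by (intro sums_add sums_mult2 wS_sums1 wS_sums_c)
  have B: "(\<lambda>n. wS S n * Num n) sums (\<Sum>n. wS S n * Num n)"
    using summ_Num[OF S] by (rule summable_sums)
  have C: "\<And>n. wS S n * Num n \<le> wS S n * ?F + wS S n * rr t ^ n"
  proof -
    fix n
    have "wS S n * Num n \<le> wS S n * (?F + rr t ^ n)"
      by (intro mult_left_mono Num_upper t wS_nn S)
    then show "wS S n * Num n \<le> wS S n * ?F + wS S n * rr t ^ n" by (simp add: algebra_simps)
  qed
  from sums_le[OF C B A] show ?thesis by simp
qed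

lemma NS_lower:
  assumes S: "S \<ge> 0" and t: "a < t" "t \<le> dth"
  shows "(1 - exp (S * (rr t - 1))) * sr_cdf b m \<Omega> (w1 * a powr \<alpha>) \<le> (\<Sum>n. wS S n * Num n)"
proof -
  let ?V = "sr_cdf b m \<Omega> (w1 * a powr \<alpha>)"
  have A: "(\<lambda>n. wS S n * ?V - wS S n * rr t ^ n * ?V) sums (1 * ?V - exp (S * (rr t - 1)) * ?V)"
    by (intro sums_diff sums_mult2 wS_sums1 wS_sums_c)
  have B: "(\<lambda>n. wS S n * Num n) sums (\<Sum>n. wS S n * Num n)"
    using summ_Num[OF S] by (rule summable_sums)
  have C: "\<And>n. wS S n * ?V - wS S n * rr t ^ n * ?V \<le> wS S n * Num n"
  proof -
    fix n
    have "wS S n * ((1 - rr t ^ n) * ?V) \<le> wS S n * Num n"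
      by (intro mult_left_mono Num_lower t wS_nn S)
    then show "wS S n * ?V - wS S n * rr t ^ n * ?V \<le> wS S n * Num n" by (simp add: algebra_simps)
  qed
  from sums_le[OF C A B] have "1 * ?V - exp (S * (rr t - 1)) * ?V \<le> (\<Sum>n. wS S n * Num n)" .
  then show ?thesis by (simp add: algebra_simps)
qed

lemma DS_lower:
  assumes S: "S \<ge> 0" and t: "a < t" "t \<le> dth"
  shows "1 - exp (S * (rr t - 1)) \<le> (\<Sum>n. wS S n * Den n)"
proof -
  have A: "(\<lambda>n. wS S n - wS S n * rr t ^ n) sums (1 - exp (S * (rr t - 1)))"
    by (intro sums_diff wS_sums1 wS_sums_c)
  have B: "(\<lambda>n. wS S n * Den n) sums (\<Sum>n. wS S n * Den n)"
    using summ_Den[OF S] by (rule summable_sums)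
  have C: "\<And>n. wS S n - wS S n * rr t ^ n \<le> wS S n * Den n"
  proof -
    fix n
    have "wS S n * (1 - rr t ^ n) \<le> wS S n * Den n"
      by (intro mult_left_mono Den_lower t wS_nn S)
    then show "wS S n - wS S n * rr t ^ n \<le> wS S n * Den n" by (simp add: algebra_simps)
  qed
  from sums_le[OF C A B] show ?thesis .
qed

lemma DS_upper:
  assumes S: "S \<ge> 0"
  shows "(\<Sum>n. wS S n * Den n) \<le> 1"
proof -
  have B: "(\<lambda>n. wS S n * Den n) sums (\<Sum>n. wS S n * Den n)"
    using summ_Den[OF S] by (rule summable_sums)
  have C: "\<And>n. wS S n * Den n \<le> wS S n"
    using wS_nn[OF S] Den_nn Den_le1 by (simp add: mult_left_le)
  from sums_le[OF C B wS_sums1] show ?thesis .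
qed

lemma NS_nn: "S \<ge> 0 \<Longrightarrow> (\<Sum>n. wS S n * Num n) \<ge> 0"
  by (intro suminf_nonneg summ_Num mult_nonneg_nonneg wS_nn Num_nn)

end


context setting begin

lemma E_lim: "t > a \<Longrightarrow> ((\<lambda>S. exp (S * (rr t - 1))) \<longlongrightarrow> 0) at_top"
  using rr_lt[of t] by real_asymp

lemma exists_t:
  assumes u: "sr_cdf b m \<Omega> (w1 * a powr \<alpha>) < u'"
  shows "\<exists>t. a < t \<and> t \<le> dth \<and> sr_cdf b m \<Omega> (w1 * t powr \<alpha>) < u'"
proof (cases "w1 = 0")
  case True
  then show ?thesis using u dd by (intro exI[of _ dth]) simp
next
  case False
  then have w: "w1 > 0" using w1_nn by simp
  interpret RD: real_distribution Mh
    using Mhp Mhs by (simp add: real_distribution_def real_distribution_axioms_def)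
  have cdfF: "cdf Mh = sr_cdf b m \<Omega>" by (simp add: fun_eq_iff cdf_def Mhc)
  define x0 where "x0 = w1 * a powr \<alpha>"
  have "continuous (at_right x0) (cdf Mh)" by (rule RD.cdf_is_right_cont)
  then have "(sr_cdf b m \<Omega> \<longlongrightarrow> sr_cdf b m \<Omega> x0) (at_right x0)"
    by (simp add: cdfF continuous_within)
  then have "eventually (\<lambda>x. sr_cdf b m \<Omega> x < u') (at_right x0)"
    using u by (intro order_tendstoD(2)) (auto simp: x0_def)
  then obtain bb where bb: "bb > x0" "\<And>y. y > x0 \<Longrightarrow> y < bb \<Longrightarrow> sr_cdf b m \<Omega> y < u'"
    unfolding eventually_at_right_field by blast
  have "isCont (\<lambda>t. w1 * t powr \<alpha>) a" using re by (intro continuous_intros) auto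
  then obtain \<delta> where \<delta>: "\<delta> > 0" "\<And>x'. dist x' a < \<delta> \<Longrightarrow> dist (w1 * x' powr \<alpha>) (w1 * a powr \<alpha>) < bb - x0"
    using bb(1) unfolding continuous_at_eps_delta by (meson diff_gt_0_iff_gt)
  define d where "d = min \<delta> (dth - a)"
  define t where "t = a + d / 2"
  have mm: "0 < d" "d \<le> \<delta>" "d \<le> dth - a" using \<delta> dd by (auto simp: d_def)
  have t1: "a < t" using mm(1) unfolding t_def by linarith
  have t2: "t \<le> dth" using mm(1,3) unfolding t_def by linarith
  have t3: "dist t a < \<delta>" using mm(1,2) unfolding t_def dist_real_def by simp
  note t = t1 t2 t3
  have "w1 * t powr \<alpha> < bb" using \<delta>(2)[OF t(3)] by (auto simp: x0_def dist_real_def)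
  moreover have "x0 < w1 * t powr \<alpha>" unfolding x0_def
    using w t re pos by (intro mult_strict_left_mono powr_less_mono2) auto
  ultimately show ?thesis using bb(2) t by blast
qed

theorem main_lim:
  fixes Pout :: "real \<Rightarrow> real"
  assumes PoutD: "\<And>S. Pout S = (\<Sum>n. wS S n * Num n) / (\<Sum>n. wS S n * Den n)"
  shows "(Pout \<longlongrightarrow> sr_cdf b m \<Omega> (w1 * a powr \<alpha>)) at_top"
proof (rule order_tendstoI)
  let ?V = "sr_cdf b m \<Omega> (w1 * a powr \<alpha>)"
  fix l assume l: "l < ?V"
  have lim1: "((\<lambda>S. (1 - exp (S * (rr dth - 1))) * ?V) \<longlongrightarrow> (1 - 0) * ?V) at_top"
    by (intro tendsto_intros E_lim dd)
  then have ev1: "eventually (\<lambda>S. l < (1 - exp (S * (rr dth - 1))) * ?V) at_top"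
    using l by (intro order_tendstoD(1)) auto
  have ev2: "eventually (\<lambda>S. exp (S * (rr dth - 1)) < 1) at_top"
    using E_lim[OF dd(1)] by (intro order_tendstoD(2)) auto
  have ev3: "eventually (\<lambda>S::real. S \<ge> 0) at_top" unfolding eventually_at_top_linorder by auto
  show "eventually (\<lambda>S. l < Pout S) at_top"
    using ev1 ev2 ev3
  proof eventually_elim
    case (elim S)
    let ?N = "\<Sum>n. wS S n * Num n" and ?D = "\<Sum>n. wS S n * Den n"
    have D1: "1 - exp (S * (rr dth - 1)) \<le> ?D" by (rule DS_lower[OF elim(3) dd(1) order_refl])
    have D2: "?D \<le> 1" by (rule DS_upper[OF elim(3)])
    have D: "0 < ?D" "?D \<le> 1" using D1 D2 elim(2) by linarith+
    have N: "0 \<le> ?N" by (rule NS_nn[OF elim(3)])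
    have "?N \<le> ?N / ?D" using D N by (simp add: le_divide_eq mult_left_le)
    moreover have "(1 - exp (S * (rr dth - 1))) * ?V \<le> ?N" by (rule NS_lower[OF elim(3) dd(1) order_refl])
    ultimately show ?case using elim(1) PoutD[of S] by linarith
  qed
next
  let ?V = "sr_cdf b m \<Omega> (w1 * a powr \<alpha>)"
  fix u' assume u': "?V < u'"
  obtain t where t: "a < t" "t \<le> dth" "sr_cdf b m \<Omega> (w1 * t powr \<alpha>) < u'"
    using exists_t[OF u'] by blast
  let ?F = "sr_cdf b m \<Omega> (w1 * t powr \<alpha>)"
  have lim1: "((\<lambda>S. (?F + exp (S * (rr t - 1))) / (1 - exp (S * (rr t - 1)))) \<longlongrightarrow> (?F + 0) / (1 - 0)) at_top"
    by (intro tendsto_intros E_lim t) auto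
  then have ev1: "eventually (\<lambda>S. (?F + exp (S * (rr t - 1))) / (1 - exp (S * (rr t - 1))) < u') at_top"
    using t by (intro order_tendstoD(2)) auto
  have ev2: "eventually (\<lambda>S. exp (S * (rr t - 1)) < 1) at_top"
    using E_lim[OF t(1)] by (intro order_tendstoD(2)) auto
  have ev3: "eventually (\<lambda>S::real. S \<ge> 0) at_top" unfolding eventually_at_top_linorder by auto
  show "eventually (\<lambda>S. Pout S < u') at_top"
    using ev1 ev2 ev3
  proof eventually_elim
    case (elim S)
    let ?N = "\<Sum>n. wS S n * Num n" and ?D = "\<Sum>n. wS S n * Den n"
    have D: "1 - exp (S * (rr t - 1)) \<le> ?D" by (rule DS_lower[OF elim(3) t(1,2)])
    have Dp: "0 < 1 - exp (S * (rr t - 1))" using elim(2) by simp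
    have N: "0 \<le> ?N" "?N \<le> ?F + exp (S * (rr t - 1))" by (rule NS_nn[OF elim(3)], rule NS_upper[OF elim(3) t(1,2)])
    have "?N / ?D \<le> (?F + exp (S * (rr t - 1))) / (1 - exp (S * (rr t - 1)))"
      using N D Dp by (intro frac_le) auto
    then show ?case using elim(1) PoutD[of S] by linarith
  qed
qed

end

theorem corollary2:
  fixes r\<^sub>e a \<theta>min \<omega>th b m \<Omega> P g Gml Gsl Gr N0 W fc c \<alpha> R :: real
    and u :: "real^3" and Mh :: "real measure"
    and dmax \<psi>th dth w1 :: real
    and Pout :: "real \<Rightarrow> real"
  assumes "r\<^sub>e > 0" "a > 0" "norm u = r\<^sub>e"
    and "\<theta>min > 0" "\<omega>th > 0"
    and "dmax = sqrt (r\<^sub>e\<^sup>2 * (sin \<theta>min)\<^sup>2 + a\<^sup>2 + 2 * r\<^sub>e * a) - r\<^sub>e * sin \<theta>min"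
    and "\<psi>th = arcsin ((r\<^sub>e + a) / r\<^sub>e * sin \<omega>th) - \<omega>th"
    and "dth = sqrt (r\<^sub>e\<^sup>2 + (r\<^sub>e + a)\<^sup>2 - 2 * r\<^sub>e * (r\<^sub>e + a) * cos \<psi>th)"
    and "a < dth" "dth \<le> dmax"
    and "b > 0" "m > 0" "\<Omega> > 0"
    and "prob_space Mh" "sets Mh = sets borel"
    and "\<And>x. measure Mh {..x} = sr_cdf b m \<Omega> x"
    and "P > 0" "g > 0" "Gml > 0" "Gsl > 0" "Gr > 0" "N0 > 0" "W > 0" "fc > 0" "c > 0" "\<alpha> > 0"
    and "R \<ge> 0"
    and "w1 = 16 * pi\<^sup>2 * fc\<^sup>2 * N0 * W * (2 powr R - 1) / (P * g * c\<^sup>2 * Gml * Gr)"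
    and "\<And>S. Pout S =
      ppp_prob S (r\<^sub>e + a) Mh
        (\<lambda>n x h. n \<ge> 1 \<and> nearest_dist u n x \<le> dmax \<and>
           log 2 (1 + P * g * (if nearest_dist u n x \<le> dth then Gml else Gsl) * Gr * h
                       * (c / (4 * pi * fc))\<^sup>2 * nearest_dist u n x powr (- \<alpha>) / (N0 * W)) < R)
      / ppp_prob S (r\<^sub>e + a) Mh (\<lambda>n x h. n \<ge> 1 \<and> nearest_dist u n x \<le> dmax)"
  shows "(Pout \<longlongrightarrow>
           sr_K b m \<Omega> * (\<Sum>n. pochhammer m n * sr_delta b m \<Omega> ^ n * (2 * b) ^ (1 + n) / (fact n)\<^sup>2
              * lower_inc_gamma (1 + real n) (w1 * a powr \<alpha> / (2 * b)))) at_top"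
  proof -
  interpret setting "r\<^sub>e" a u Mh dmax dth b m \<Omega> P g Gml Gsl Gr N0 W fc c \<alpha> R w1
    by (intro setting.intro) (fact assms)+
  have "\<And>S. Pout S = (\<Sum>n. wS S n * Num n) / (\<Sum>n. wS S n * Den n)"
    using assms(29) by (simp add: ppp_prob_def wS_def Num_def Den_def Enum_def Eden_def)
  then have "(Pout \<longlongrightarrow> sr_cdf b m \<Omega> (w1 * a powr \<alpha>)) at_top" by (rule main_lim)
  then show ?thesis by (simp only: sr_cdf_def)
qed

end
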